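(* Let $w=w_1\cdots w_n$ be a word of distinct positive integers avoiding $31245,32145,31254,32154$, with positions of left-to-right maxima $l_1<\dots<l_s$ and of right-to-left maxima $r_1<\dots<r_t$ ($l_s=r_1$). Assume $t>1$, $l_s>s$, $s>2$ and $w_{l_{s-1}}>w_{r_2}$. Let $x=\max(\{j: 1\le j<l_{s-1},\ w_j>w_{j+1}\}\cup\{0\})$. Then one of the following holds: (II-1) $x=0$; (II-2) $x\ne0$ and $l_s=l_{s-1}+1$; (II-3) $x\neq0$, $l_s>l_{s-1}+1$, the set $\{i: l_{s-1}<i<l_s,\ w_x<w_i<w_{l_{s-1}}\}$ is nonempty, and with $k$ its maximum we have $w_x<w_j<w_{l_{s-1}}$ for all $l_{s-1}<j\le k$ and $w_j<w_x$ for all $k<j<l_s$; moreover, if $k<l_s-1$ then $w_x>w_{r_2}$; (II-4) $x\ne0$, $l_s>l_{s-1}+1$, $w_j<w_x$ for all $l_{s-1}<j<l_s$, and $w_x>w_{r_2}$.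
   Context: A word of distinct positive integers avoids a pattern $P$ (a permutation of $[m]$) if no subsequence of length $m$ is order-isomorphic to $P$. A left-to-right (resp. right-to-left) maximum of $w$ is a letter $w_i$ greater than all letters to its left (resp. right). *)

theory Defs
  imports Main "HOL-Library.Sublist"
begin

definition letter :: "nat list \<Rightarrow> nat \<Rightarrow> nat" where
  "letter w i = w ! (i - 1)"

definition distinct_pos_word :: "nat list \<Rightarrow> bool" where
  "distinct_pos_word w \<longleftrightarrow> distinct w \<and> (\<forall>a \<in> set w. 0 < a)"

definition is_perm_pattern :: "nat list \<Rightarrow> bool" where
  "is_perm_pattern P \<longleftrightarrow> set P = {1..length P} \<and> distinct P"

definition contains_pattern :: "nat list \<Rightarrow> nat list \<Rightarrow> bool" where
  "contains_pattern w P \<longleftrightarrow>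
     (\<exists>v. subseq v w \<and> length v = length P \<and>
          (\<forall>a < length P. \<forall>b < length P. v ! a < v ! b \<longleftrightarrow> P ! a < P ! b))"

definition avoids :: "nat list \<Rightarrow> nat list \<Rightarrow> bool" where
  "avoids w P \<longleftrightarrow> \<not> contains_pattern w P"

definition ltr_max_pos :: "nat list \<Rightarrow> nat set" where
  "ltr_max_pos w = {i. 1 \<le> i \<and> i \<le> length w \<and>
      (\<forall>j. 1 \<le> j \<and> j < i \<longrightarrow> letter w j < letter w i)}"

definition rtl_max_pos :: "nat list \<Rightarrow> nat set" where
  "rtl_max_pos w = {i. 1 \<le> i \<and> i \<le> length w \<and>
      (\<forall>j. i < j \<and> j \<le> length w \<longrightarrow> letter w j < letter w i)}"

definition lpos :: "nat list \<Rightarrow> nat \<Rightarrow> nat" where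
  "lpos w k = sorted_list_of_set (ltr_max_pos w) ! (k - 1)"

definition rpos :: "nat list \<Rightarrow> nat \<Rightarrow> nat" where
  "rpos w k = sorted_list_of_set (rtl_max_pos w) ! (k - 1)"

end

theory Submission imports Defs begin
lemma subseq_idx:
  "sorted_wrt (<) is \<Longrightarrow> (\<forall>i\<in>set is. i < length ys) \<Longrightarrow> subseq (map ((!) ys) is) ys"
proof (induction ys arbitrary: "is")
  case Nil then show ?case by (cases "is") auto
next
  case (Cons y ys)
  show ?case
  proof (cases "is")
    case Nil then show ?thesis by simp
  next
    case (Cons i is')
    have pos: "\<forall>k\<in>set is'. 0 < k" using Cons.prems \<open>is = i # is'\<close> by auto
    have e: "map ((!) (y#ys)) is' = map ((!) ys) (map (\<lambda>k. k - 1) is')"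
      using pos by (auto simp: nth_Cons')
    have so: "sorted_wrt (<) is'" using Cons.prems \<open>is = i # is'\<close> by simp
    have s: "sorted_wrt (<) (map (\<lambda>k. k - 1) is')"
      unfolding sorted_wrt_map
      by (rule sorted_wrt_mono_rel[OF _ so]) (use pos in auto)
    show ?thesis
    proof (cases "i = 0")
      case True
      have "subseq (map ((!) ys) (map (\<lambda>k. k - 1) is')) ys"
        using Cons.IH[OF s] Cons.prems pos \<open>is = i # is'\<close> by fastforce
      then have "subseq (map ((!) (y#ys)) is') ys" by (simp only: e)
      then show ?thesis using True \<open>is = i # is'\<close> by simp
    next
      case False
      have e2: "map ((!) (y#ys)) is = map ((!) ys) (map (\<lambda>k. k - 1) is)"
        using pos False \<open>is = i # is'\<close> by (auto simp: nth_Cons')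
      have s2: "sorted_wrt (<) (map (\<lambda>k. k - 1) is)"
        unfolding sorted_wrt_map
        by (rule sorted_wrt_mono_rel[OF _ Cons.prems(1)]) (use pos False \<open>is = i # is'\<close> in auto)
      have "subseq (map ((!) ys) (map (\<lambda>k. k - 1) is)) ys"
        using Cons.IH[OF s2] Cons.prems pos False \<open>is = i # is'\<close> by fastforce
      then have "subseq (map ((!) (y#ys)) is) ys" by (simp only: e2)
      then show ?thesis by (rule list_emb_Cons)
    qed
  qed
qed

lemma all5: "(\<forall>a<Suc (Suc (Suc (Suc (Suc 0)))). Q a) = (Q 0 \<and> Q 1 \<and> Q 2 \<and> Q 3 \<and> Q 4)"
proof
  assume "Q 0 \<and> Q 1 \<and> Q 2 \<and> Q 3 \<and> Q 4"
  then show "\<forall>a<Suc (Suc (Suc (Suc (Suc 0)))). Q a" by (auto simp: less_Suc_eq eval_nat_numeral)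
qed auto

lemma iso_check:
  fixes A B C D E :: nat
  assumes "B < A" "C < A" "A < D" "A < E" "B \<noteq> C" "D \<noteq> E"
  shows "\<exists>P\<in>{[3,1,2,4,5::nat],[3,2,1,4,5],[3,1,2,5,4],[3,2,1,5,4]}.
     (\<forall>a < length P. \<forall>b < length P. [A,B,C,D,E] ! a < [A,B,C,D,E] ! b \<longleftrightarrow> P ! a < P ! b)"
proof (cases "B < C"; cases "D < E")
  assume "B < C" "D < E" then show ?thesis using assms by (intro bexI[of _ "[3,1,2,4,5::nat]"]) (simp_all add: all5)
next
  assume "B < C" "\<not> D < E" then show ?thesis using assms by (intro bexI[of _ "[3,1,2,5,4::nat]"]) (simp_all add: all5)
next
  assume "\<not> B < C" "D < E" then show ?thesis using assms by (intro bexI[of _ "[3,2,1,4,5::nat]"]) (simp_all add: all5)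
next
  assume "\<not> B < C" "\<not> D < E" then show ?thesis using assms by (intro bexI[of _ "[3,2,1,5,4::nat]"]) (simp_all add: all5)
qed

lemma no_pat:
  assumes "distinct w"
    and "avoids w [3,1,2,4,5]" "avoids w [3,2,1,4,5]" "avoids w [3,1,2,5,4]" "avoids w [3,2,1,5,4]"
    and "1 \<le> p" "p < q" "q < r" "r < u" "u < v" "v \<le> length w"
    and "letter w q < letter w p" "letter w r < letter w p" "letter w p < letter w u" "letter w p < letter w v"
  shows False
proof -
  define V where "V = [w!(p-1), w!(q-1), w!(r-1), w!(u-1), w!(v-1)]"
  have "V = map ((!) w) [p-1,q-1,r-1,u-1,v-1]" unfolding V_def by simp
  moreover have "subseq (map ((!) w) [p-1,q-1,r-1,u-1,v-1]) w" proof (rule subseq_idx)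
    show "sorted_wrt (<) [p-1,q-1,r-1,u-1,v-1]" using assms(6-10) by (simp, intro conjI; linarith)
    show "\<forall>i\<in>set [p-1,q-1,r-1,u-1,v-1]. i < length w" using assms(6-11) by (simp, intro conjI; linarith)
  qed
  ultimately have sub: "subseq V w" by simp
  have ne: "w ! (q-1) \<noteq> w ! (r-1)" "w ! (u-1) \<noteq> w ! (v-1)"
  proof -
    have "q-1 < length w" "r-1 < length w" "u-1 < length w" "v-1 < length w" "q-1 \<noteq> r-1" "u-1 \<noteq> v-1"
      using assms(6-11) by linarith+
    then show "w ! (q-1) \<noteq> w ! (r-1)" "w ! (u-1) \<noteq> w ! (v-1)"
      using nth_eq_iff_index_eq[OF assms(1)] by simp_all
  qed
  have h: "w!(q-1) < w!(p-1)" "w!(r-1) < w!(p-1)" "w!(p-1) < w!(u-1)" "w!(p-1) < w!(v-1)"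
    using assms(12-15) unfolding letter_def by auto
  obtain P :: "nat list" where P: "P\<in>{[3,1,2,4,5],[3,2,1,4,5],[3,1,2,5,4],[3,2,1,5,4]}"
     "\<forall>a < length P. \<forall>b < length P. V ! a < V ! b \<longleftrightarrow> P ! a < P ! b"
    using iso_check[OF h ne] unfolding V_def by blast
  have "length P = 5" using P(1) by auto
  then have "contains_pattern w P" unfolding contains_pattern_def
    using sub P(2) by (intro exI[of _ V]) (simp add: V_def)
  then show False using P(1) assms(2-5) unfolding avoids_def by blast
qed

lemma dl: "distinct w \<Longrightarrow> 1 \<le> i \<Longrightarrow> i \<le> length w \<Longrightarrow> 1 \<le> j \<Longrightarrow> j \<le> length w
  \<Longrightarrow> letter w i = letter w j \<Longrightarrow> i = j"
proof -
  assume a: "distinct w" "1 \<le> i" "i \<le> length w" "1 \<le> j" "j \<le> length w" "letter w i = letter w j"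
  have "i - 1 < length w" "j - 1 < length w" using a by linarith+
  then have "i - 1 = j - 1" using a nth_eq_iff_index_eq[of w "i-1" "j-1"] unfolding letter_def by simp
  then show "i = j" using a by linarith
qed

lemma sorted_next:
  fixes xs :: "nat list"
  assumes "sorted_wrt (<) xs" "Suc k < length xs" "i \<in> set xs" "xs ! k < i"
  shows "xs ! Suc k \<le> i"
proof -
  obtain j where j: "j < length xs" "i = xs ! j" using assms(3) by (auto simp: in_set_conv_nth)
  have "\<not> j \<le> k"
  proof
    assume "j \<le> k"
    then have "xs ! j \<le> xs ! k"
    proof (cases "j = k")
      case False
      then have "j < k" using \<open>j \<le> k\<close> by simp
      moreover have "k < length xs" using assms(2) by simp
      ultimately have "xs ! j < xs ! k" by (rule sorted_wrt_nth_less[OF assms(1)])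
      then show ?thesis by simp
    qed simp
    then show False using assms(4) j by simp
  qed
  then have "Suc k \<le> j" by simp
  then show ?thesis
  proof (cases "Suc k = j")
    case False
    then have "Suc k < j" using \<open>Suc k \<le> j\<close> by simp
    then show ?thesis using sorted_wrt_nth_less[OF assms(1) _ j(1)] j(2) by (simp add: less_imp_le)
  qed (use j in simp)
qed

lemma prefix_max:
  assumes "distinct w" "1 \<le> j" "j \<le> length w"
  shows "\<exists>i\<in>ltr_max_pos w. i \<le> j \<and> letter w j \<le> letter w i"
proof -
  let ?S = "{1..j}"
  have "finite (letter w ` ?S)" "letter w ` ?S \<noteq> {}" using assms by auto
  then obtain i where i: "i \<in> ?S" "letter w i = Max (letter w ` ?S)"
    using Max_in by (metis imageE)
  have "i \<in> ltr_max_pos w"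
    unfolding ltr_max_pos_def
  proof (intro CollectI conjI allI impI)
    show "1 \<le> i" "i \<le> length w" using i assms by auto
    fix j' assume "1 \<le> j' \<and> j' < i"
    then have "letter w j' \<le> letter w i" "j' \<noteq> i" using i by auto
    moreover have "letter w j' \<noteq> letter w i"
      using dl[OF assms(1), of j' i] \<open>1 \<le> j' \<and> j' < i\<close> i assms by auto
    ultimately show "letter w j' < letter w i" by simp
  qed
  moreover have "letter w j \<le> letter w i" using i assms by auto
  ultimately show ?thesis using i by auto
qed
theorem lemma3p2:
  fixes w :: "nat list"
  defines "s \<equiv> card (ltr_max_pos w)"
      and "t \<equiv> card (rtl_max_pos w)"
  defines "x \<equiv> Max ({j. 1 \<le> j \<and> j < lpos w (s - 1) \<and> letter w j > letter w (j + 1)} \<union> {0})"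
  assumes word: "distinct_pos_word w"
      and av1: "avoids w [3,1,2,4,5]"
      and av2: "avoids w [3,2,1,4,5]"
      and av3: "avoids w [3,1,2,5,4]"
      and av4: "avoids w [3,2,1,5,4]"
      and ht: "t > 1"
      and hls: "lpos w s > s"
      and hs: "s > 2"
      and hcmp: "letter w (lpos w (s - 1)) > letter w (rpos w 2)"
  shows "x = 0
    \<or> (x \<noteq> 0 \<and> lpos w s = lpos w (s - 1) + 1)
    \<or> (x \<noteq> 0 \<and> lpos w s > lpos w (s - 1) + 1 \<and>
        {i. lpos w (s - 1) < i \<and> i < lpos w s \<and>
            letter w x < letter w i \<and> letter w i < letter w (lpos w (s - 1))} \<noteq> {} \<and>
        (let k = Max {i. lpos w (s - 1) < i \<and> i < lpos w s \<and>
            letter w x < letter w i \<and> letter w i < letter w (lpos w (s - 1))} in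
          (\<forall>j. lpos w (s - 1) < j \<and> j \<le> k \<longrightarrow>
               letter w x < letter w j \<and> letter w j < letter w (lpos w (s - 1))) \<and>
          (\<forall>j. k < j \<and> j < lpos w s \<longrightarrow> letter w j < letter w x) \<and>
          (k < lpos w s - 1 \<longrightarrow> letter w x > letter w (rpos w 2))))
    \<or> (x \<noteq> 0 \<and> lpos w s > lpos w (s - 1) + 1 \<and>
        (\<forall>j. lpos w (s - 1) < j \<and> j < lpos w s \<longrightarrow> letter w j < letter w x) \<and>
        letter w x > letter w (rpos w 2))"
  proof -
  let ?a = "lpos w (s - 1)" and ?m = "lpos w s" and ?r = "rpos w 2"
  let ?L = "ltr_max_pos w" and ?R = "rtl_max_pos w"
  define xs where "xs = sorted_list_of_set ?L"
  define ys where "ys = sorted_list_of_set ?R"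
  have dw: "distinct w" using word unfolding distinct_pos_word_def by simp
  have finL: "finite ?L" by (rule finite_subset[of _ "{1..length w}"]) (auto simp: ltr_max_pos_def)
  have finR: "finite ?R" by (rule finite_subset[of _ "{1..length w}"]) (auto simp: rtl_max_pos_def)
  have xs_s: "sorted_wrt (<) xs" "length xs = s" "set xs = ?L"
    using finL by (auto simp: xs_def s_def)
  have ys_s: "sorted_wrt (<) ys" "length ys = t" "set ys = ?R"
    using finR by (auto simp: ys_def t_def)
  have e1: "s - 1 - 1 = s - 2" by linarith
  have e2: "s - 1 = Suc (s - 2)" using hs by linarith
  have adef: "?a = xs ! (s - 2)" by (simp only: lpos_def xs_def e1)
  have mdef: "?m = xs ! Suc (s - 2)" by (simp only: lpos_def xs_def e2)
  have rdef: "?r = ys ! 1" unfolding rpos_def ys_def by simp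
  have i1: "s - 2 < length xs" "Suc (s - 2) < length xs" using xs_s(2) hs by linarith+
  have aL: "?a \<in> ?L" unfolding adef xs_s(3)[symmetric] by (rule nth_mem) (rule i1(1))
  have mL: "?m \<in> ?L" unfolding mdef xs_s(3)[symmetric] by (rule nth_mem) (rule i1(2))
  have am: "?a < ?m" unfolding adef mdef by (rule sorted_wrt_nth_less[OF xs_s(1)]) (use i1 in simp_all)
  have between: "\<And>i. i \<in> ?L \<Longrightarrow> ?a < i \<Longrightarrow> ?m \<le> i"
    unfolding adef mdef xs_s(3)[symmetric] by (rule sorted_next[OF xs_s(1) i1(2)])
  have a1: "1 \<le> ?a" "?a \<le> length w" using aL by (auto simp: ltr_max_pos_def)
  have m1: "1 \<le> ?m" "?m \<le> length w" using mL by (auto simp: ltr_max_pos_def)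
  have i2: "0 < length ys" "1 < length ys" using ys_s(2) ht by linarith+
  have rR: "?r \<in> ?R" unfolding rdef ys_s(3)[symmetric] by (rule nth_mem) (rule i2(2))
  have r0R: "ys ! 0 \<in> ?R" unfolding ys_s(3)[symmetric] by (rule nth_mem) (rule i2(1))
  have r0r: "ys ! 0 < ?r" unfolding rdef by (rule sorted_wrt_nth_less[OF ys_s(1)]) (use i2 in simp_all)
  have Rge: "\<And>i. i \<in> ?R \<Longrightarrow> ?m \<le> i"
  proof (rule ccontr)
    fix i assume "i \<in> ?R" "\<not> ?m \<le> i"
    then have "letter w ?m < letter w i" "1 \<le> i" using m1 by (auto simp: rtl_max_pos_def)
    moreover have "letter w i < letter w ?m" using mL \<open>1 \<le> i\<close> \<open>\<not> ?m \<le> i\<close>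
      by (auto simp: ltr_max_pos_def)
    ultimately show False by simp
  qed
  have mr: "?m < ?r" using Rge[OF r0R] r0r by simp
  have rn: "?r \<le> length w" using rR by (auto simp: rtl_max_pos_def)
  have B: "\<And>j. ?a < j \<Longrightarrow> j < ?m \<Longrightarrow> letter w j < letter w ?a"
  proof -
    fix j assume j: "?a < j" "j < ?m"
    obtain i where i: "i \<in> ?L" "i \<le> j" "letter w j \<le> letter w i"
      using prefix_max[OF dw, of j] j a1 m1 by auto
    have "i \<le> ?a"
    proof (rule ccontr)
      assume "\<not> i \<le> ?a"
      then have "?m \<le> i" by (intro between[OF i(1)]) simp
      then show False using i(2) j by simp
    qed
    then have "letter w i \<le> letter w ?a" using aL i(1)
      by (cases "i = ?a") (auto simp: ltr_max_pos_def)
    moreover have "letter w j \<noteq> letter w ?a" using dl[OF dw, of j ?a] j a1 m1 by auto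
    ultimately show "letter w j < letter w ?a" using i(3) by simp
  qed
  define D where "D = {j. 1 \<le> j \<and> j < ?a \<and> letter w j > letter w (j + 1)}"
  have xD: "x = Max (D \<union> {0})" unfolding x_def D_def by simp
  have finD: "finite (D \<union> {0})" unfolding D_def by (rule finite_subset[of _ "{..?a}"]) auto
  show ?thesis
  proof (cases "x = 0")
    case True then show ?thesis by simp
  next
    case xne: False
    have "x \<in> D \<union> {0}" unfolding xD by (rule Max_in[OF finD]) simp
    then have xD': "1 \<le> x" "x < ?a" "letter w (x + 1) < letter w x" using xne unfolding D_def by auto
    have xm: "letter w x < letter w ?m" using mL xD' am by (auto simp: ltr_max_pos_def)
    have PAT: "\<And>r u v. x + 1 < r \<Longrightarrow> r < u \<Longrightarrow> u < v \<Longrightarrow> v \<le> length w \<Longrightarrow>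
        letter w r < letter w x \<Longrightarrow> letter w x < letter w u \<Longrightarrow> letter w x < letter w v \<Longrightarrow> False"
    proof -
      fix r u v assume h: "x + 1 < r" "r < u" "u < v" "v \<le> length w"
        "letter w r < letter w x" "letter w x < letter w u" "letter w x < letter w v"
      show False by (rule no_pat[OF dw av1 av2 av3 av4 xD'(1) _ h(1-4) xD'(3) h(5-7)]) simp
    qed
    have xn: "x \<le> length w" using xD' a1 by linarith
    have nex: "\<And>j. 1 \<le> j \<Longrightarrow> j \<le> length w \<Longrightarrow> j \<noteq> x \<Longrightarrow> letter w j \<noteq> letter w x"
    proof
      fix j assume "1 \<le> j" "j \<le> length w" "j \<noteq> x" "letter w j = letter w x"
      then show False using dl[OF dw \<open>1 \<le> j\<close> \<open>j \<le> length w\<close> xD'(1) xn] by simp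
    qed
    have ltx: "\<And>j. 1 \<le> j \<Longrightarrow> j \<le> length w \<Longrightarrow> j \<noteq> x \<Longrightarrow> \<not> letter w x < letter w j \<Longrightarrow> letter w j < letter w x"
    proof -
      fix j assume h: "1 \<le> j" "j \<le> length w" "j \<noteq> x" "\<not> letter w x < letter w j"
      show "letter w j < letter w x" using nex[OF h(1-3)] h(4) by linarith
    qed
    have nexm: "\<And>j. ?a < j \<Longrightarrow> j < ?m \<Longrightarrow> letter w j \<noteq> letter w x"
    proof -
      fix j assume "?a < j" "j < ?m"
      then have "j \<noteq> x" "1 \<le> j" "j \<le> length w" using xD' m1 by linarith+
      then show "letter w j \<noteq> letter w x" using nex by blast
    qed
    have rx: "\<And>j. ?a < j \<Longrightarrow> j < ?m \<Longrightarrow> letter w j < letter w x \<Longrightarrow> letter w x > letter w ?r"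
    proof (rule ccontr)
      fix j assume j: "?a < j" "j < ?m" "letter w j < letter w x" "\<not> letter w ?r < letter w x"
      have "?r \<noteq> x" "1 \<le> ?r" using mr am xD' by linarith+
      then have "letter w x < letter w ?r" using nex[of ?r] j(4) rn by linarith
      note xr = this
      show False by (rule PAT[of j ?m ?r]; use j xD' mr rn xm xr in linarith)
    qed
    have K: "\<And>j j'. ?a < j \<Longrightarrow> j < j' \<Longrightarrow> j' < ?m \<Longrightarrow> letter w j < letter w x \<Longrightarrow> letter w j' < letter w x"
    proof (rule ccontr)
      fix j j' assume j: "?a < j" "j < j'" "j' < ?m" "letter w j < letter w x" "\<not> letter w j' < letter w x"
      have "j' \<noteq> x" "1 \<le> j'" "j' \<le> length w" using j xD' m1 by linarith+
      then have "letter w x < letter w j'" using nex[of j'] j(5) by linarith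
      note xj = this
      show False by (rule PAT[of j j' ?m]; use j xD' xm m1 xj in linarith)
    qed
    show ?thesis
    proof (cases "?m = ?a + 1")
      case True then show ?thesis using xne by simp
    next
      case mne: False
      then have ma: "?m > ?a + 1" using am by simp
      let ?S = "{i. ?a < i \<and> i < ?m \<and> letter w x < letter w i \<and> letter w i < letter w ?a}"
      show ?thesis
      proof (cases "?S = {}")
        case True
        have all: "\<forall>j. ?a < j \<and> j < ?m \<longrightarrow> letter w j < letter w x"
        proof (intro allI impI)
          fix j assume j: "?a < j \<and> j < ?m"
          have "\<not> letter w x < letter w j" using True B j by blast
          moreover have "letter w j \<noteq> letter w x" using j by (intro nexm) auto
          ultimately show "letter w j < letter w x" by linarith
        qed
        have "letter w x > letter w ?r" using rx[of "?a + 1"] all ma by simp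
        then show ?thesis using all xne ma by (intro disjI2) simp
      next
        case False
        have finS: "finite ?S" by (rule finite_subset[of _ "{..?m}"]) auto
        define k where "k = Max ?S"
        have kS: "k \<in> ?S" unfolding k_def by (rule Max_in[OF finS False])
        have kge: "\<And>i. i \<in> ?S \<Longrightarrow> i \<le> k" unfolding k_def by (rule Max_ge[OF finS])
        have P1: "\<forall>j. ?a < j \<and> j \<le> k \<longrightarrow> letter w x < letter w j \<and> letter w j < letter w ?a"
        proof (intro allI impI)
          fix j assume j: "?a < j \<and> j \<le> k"
          have "\<not> letter w j < letter w x"
          proof
            assume "letter w j < letter w x"
            then have "letter w k < letter w x" using K[of j k] j kS by (cases "j = k") auto
            then show False using kS by simp
          qed
          moreover have "letter w j \<noteq> letter w x" using j kS by (intro nexm) auto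
          ultimately have "letter w x < letter w j" by linarith
          then show "letter w x < letter w j \<and> letter w j < letter w ?a" using B j kS by auto
        qed
        have P2: "\<forall>j. k < j \<and> j < ?m \<longrightarrow> letter w j < letter w x"
        proof (intro allI impI)
          fix j assume j: "k < j \<and> j < ?m"
          have "\<not> letter w x < letter w j"
          proof
            assume "letter w x < letter w j"
            then have "j \<in> ?S" using B j kS by auto
            then show False using kge j by fastforce
          qed
          moreover have "letter w j \<noteq> letter w x" using j kS by (intro nexm) auto
          ultimately show "letter w j < letter w x" by linarith
        qed
        have P3: "k < ?m - 1 \<longrightarrow> letter w x > letter w ?r"
        proof
          assume "k < ?m - 1"
          then show "letter w x > letter w ?r" using rx[of "k + 1"] P2 kS by auto
        qed
        have third: "x \<noteq> 0 \<and> ?m > ?a + 1 \<and> ?S \<noteq> {} \<and>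
          (let k = Max ?S in
          (\<forall>j. ?a < j \<and> j \<le> k \<longrightarrow> letter w x < letter w j \<and> letter w j < letter w ?a) \<and>
          (\<forall>j. k < j \<and> j < ?m \<longrightarrow> letter w j < letter w x) \<and>
          (k < ?m - 1 \<longrightarrow> letter w x > letter w ?r))"
          unfolding Let_def k_def[symmetric] using xne ma False P1 P2 P3 by (intro conjI)
        show ?thesis by (rule disjI2[OF disjI2[OF disjI1[OF third]]])
      qed
    qed
  qed
qed

end
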